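(* Let $T>0$ and let $\mathcal F(t,r)$ be continuous on $[0,T]\times(0,\infty)$ with $|\mathcal F(t,r)|\le\frac{C\varepsilon^2}{1+r^2+t^2}$. There is $c>0$ such that for any $\delta\in(0,1)$ with $\varepsilon\le c\delta^2$ and any fixed $\ell>0$: if $(\theta(t),a(t))$, $t\in[0,T]$, $a(t)>0$, solves $\dot\theta=-\lambda\mathcal F(t,\tilde R)\partial_a\tilde R$, $\dot a=\lambda\mathcal F(t,\tilde R)\partial_\theta\tilde R$ with $\tilde R=R(\theta+at,a,\ell)$ and $(\theta(0),a(0),\ell)\in\mathcal D(\delta)$, then $(\theta(t),a(t),\ell)\in\mathcal D(\delta/2)$ for all $t\in[0,T]$.
   Context: Fix $m>0$, $\lambda>0$. For $a,\ell>0$: $\kappa=(1+4a^2\ell/m^2)^{-1/2}$, $p=\frac{m}{2a^2\kappa}$; $G_\kappa(x)=\sqrt{x^2-1}-\kappa\ln(x+\sqrt{x^2-1})$ on $[1,\infty)$, $H_\kappa=G_\kappa^{-1}$; $R(\theta,a,\ell)=pH_\kappa(|\theta|/p)-p\kappa$; $\partial_\theta\tilde R,\partial_a\tilde R$ are the partial derivatives of $(\theta,a)\mapsto R(\theta+at,a,\ell)$. $\mathcal D(\delta)=\{(\theta,a,\ell)\in\mathbb R\times(0,\infty)^2: a\langle\ell\rangle^{1/2}\ge\delta\}$, $\langle x\rangle=(2+|x|^2)^{1/2}$. *)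

theory Defs
  imports "HOL-Analysis.Analysis"
begin

definition kappa :: "real \<Rightarrow> real \<Rightarrow> real \<Rightarrow> real" where
  "kappa m a l = 1 / sqrt (1 + 4 * a\<^sup>2 * l / m\<^sup>2)"

definition pp :: "real \<Rightarrow> real \<Rightarrow> real \<Rightarrow> real" where
  "pp m a l = m / (2 * a\<^sup>2 * kappa m a l)"

definition Gk :: "real \<Rightarrow> real \<Rightarrow> real" where
  "Gk k x = sqrt (x\<^sup>2 - 1) - k * ln (x + sqrt (x\<^sup>2 - 1))"

definition Hk :: "real \<Rightarrow> real \<Rightarrow> real" where
  "Hk k y = (THE x. 1 \<le> x \<and> Gk k x = y)"

definition RR :: "real \<Rightarrow> real \<Rightarrow> real \<Rightarrow> real \<Rightarrow> real" where
  "RR m \<theta> a l = pp m a l * Hk (kappa m a l) (\<bar>\<theta>\<bar> / pp m a l) - pp m a l * kappa m a l"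

definition Rtil :: "real \<Rightarrow> real \<Rightarrow> real \<Rightarrow> real \<Rightarrow> real \<Rightarrow> real" where
  "Rtil m l t \<theta> a = RR m (\<theta> + a * t) a l"

definition dth_Rtil :: "real \<Rightarrow> real \<Rightarrow> real \<Rightarrow> real \<Rightarrow> real \<Rightarrow> real" where
  "dth_Rtil m l t \<theta> a = deriv (\<lambda>\<theta>'. Rtil m l t \<theta>' a) \<theta>"

definition da_Rtil :: "real \<Rightarrow> real \<Rightarrow> real \<Rightarrow> real \<Rightarrow> real \<Rightarrow> real" where
  "da_Rtil m l t \<theta> a = deriv (\<lambda>a'. Rtil m l t \<theta> a') a"

definition jbr :: "real \<Rightarrow> real" where
  "jbr x = sqrt (2 + x\<^sup>2)"

definition DD :: "real \<Rightarrow> (real \<times> real \<times> real) set" where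
  "DD \<delta> = {(\<theta>, a, l). 0 < a \<and> 0 < l \<and> a * sqrt (jbr l) \<ge> \<delta>}"

end

theory Submission
  imports Defs
begin



lemma sinh_diff_ge: fixes x y :: real assumes "x \<le> y" shows "y - x \<le> sinh y - sinh x"
proof -
  have "(\<lambda>z. z - sinh z) y \<le> (\<lambda>z. z - sinh z) x"
  proof (rule DERIV_nonpos_imp_nonincreasing[OF assms])
    fix z assume "x \<le> z" "z \<le> y"
    show "\<exists>yy. ((\<lambda>z. z - sinh z) has_real_derivative yy) (at z) \<and> yy \<le> 0"
      using cosh_real_ge_1[of z] by (intro exI[of _ "1 - cosh z"]) (auto intro!: derivative_eq_intros)
  qed
  then show ?thesis by simp
qed

lemma arctan_diff_le: fixes x y :: real assumes "x \<le> y" shows "arctan y - arctan x \<le> y - x"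
proof -
  have "(\<lambda>z. z - arctan z) x \<le> (\<lambda>z. z - arctan z) y"
  proof (rule DERIV_nonneg_imp_nondecreasing[OF assms])
    fix z assume "x \<le> z" "z \<le> y"
    have "1 + z\<^sup>2 > 0" by (simp add: add_pos_nonneg)
    then have "1 / (1 + z\<^sup>2) \<le> 1" by (simp add: divide_le_eq_1)
    then show "\<exists>yy. ((\<lambda>z. z - arctan z) has_real_derivative yy) (at z) \<and> yy \<ge> 0"
      by (intro exI[of _ "1 - 1/(1+z\<^sup>2)"]) (auto intro!: derivative_eq_intros simp: field_simps)
  qed
  then show ?thesis by simp
qed

lemma arctan_abs_diff_le: "\<bar>arctan x - arctan y\<bar> \<le> \<bar>x - y\<bar>"
proof (cases "x \<le> y")
  case True
  then have "arctan x \<le> arctan y" by (simp add: arctan_le_iff)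
  then show ?thesis using arctan_diff_le[OF True] True by linarith
next
  case False
  then have "arctan y \<le> arctan x" by (simp add: arctan_le_iff)
  then show ?thesis using arctan_diff_le[of y x] False by linarith
qed

lemma pi2_minus_arctan_le: fixes x :: real assumes "x > 0" shows "pi/2 - arctan x \<le> 1/x"
proof -
  have "arctan (1/x) = pi/2 - arctan x" using arctan_inverse[of x] assms by (simp add: inverse_eq_divide)
  moreover have "arctan (1/x) \<le> 1/x"
  proof -
    have "0 \<le> 1/x" using assms by simp
    from arctan_diff_le[OF this] show ?thesis by simp
  qed
  ultimately show ?thesis by simp
qed

definition Qf :: "real \<Rightarrow> real \<Rightarrow> real" where "Qf m a = m / (2 * a\<^sup>2)"
definition Sf :: "real \<Rightarrow> real \<Rightarrow> real \<Rightarrow> real" where "Sf m l a = sqrt (1 + 4 * a\<^sup>2 * l / m\<^sup>2)"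
definition Pf :: "real \<Rightarrow> real \<Rightarrow> real \<Rightarrow> real" where "Pf m l a = Qf m a * Sf m l a"
definition Kf :: "real \<Rightarrow> real \<Rightarrow> real \<Rightarrow> real \<Rightarrow> real" where
  "Kf m l a \<xi> = Pf m l a * sinh \<xi> - Qf m a * \<xi>"
definition Xi :: "real \<Rightarrow> real \<Rightarrow> real \<Rightarrow> real \<Rightarrow> real" where
  "Xi m l s a = (THE \<xi>. Kf m l a \<xi> = s)"
definition Rf :: "real \<Rightarrow> real \<Rightarrow> real \<Rightarrow> real \<Rightarrow> real" where
  "Rf m l s a = Pf m l a * cosh (Xi m l s a) - Qf m a"
definition Rm :: "real \<Rightarrow> real \<Rightarrow> real \<Rightarrow> real" where
  "Rm m l a = 2 * l / (m * (1 + Sf m l a))"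

locale kep =
  fixes m l :: real
  assumes mpos: "0 < m" and lpos: "0 < l"
begin

lemma S_gt1: "a \<noteq> 0 \<Longrightarrow> Sf m l a > 1"
  unfolding Sf_def using mpos lpos by (simp add: field_simps)

lemma Q_pos: "a \<noteq> 0 \<Longrightarrow> Qf m a > 0"
  unfolding Qf_def using mpos by simp

lemma PQ: "a \<noteq> 0 \<Longrightarrow> Qf m a < Pf m l a"
  unfolding Pf_def using S_gt1 Q_pos by simp

lemma Rm_eq: assumes "a \<noteq> 0" shows "Pf m l a - Qf m a = Rm m l a"
proof -
  define S where "S = Sf m l a"
  have S1: "S > 1" using S_gt1[OF assms] S_def by simp
  have S2: "S\<^sup>2 = 1 + 4 * a\<^sup>2 * l / m\<^sup>2"
    unfolding S_def Sf_def using mpos lpos by simp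
  have e1: "Pf m l a - Qf m a = Qf m a * (S - 1)" by (simp add: Pf_def S_def algebra_simps)
  have e2: "(S - 1) * (S + 1) = 4 * a\<^sup>2 * l / m\<^sup>2" using S2 by (simp add: algebra_simps power2_eq_square)
  have e3: "Qf m a * (4 * a\<^sup>2 * l / m\<^sup>2) = 2 * l / m"
    using assms mpos by (simp add: Qf_def field_simps power2_eq_square)
  have "Qf m a * (S - 1) * (S + 1) = 2 * l / m" using e2 e3 by (metis mult.assoc)
  moreover have "S + 1 \<noteq> 0" using S1 by simp
  ultimately have "Qf m a * (S - 1) = 2 * l / m / (S + 1)" using mpos by (simp add: eq_divide_eq mult.commute mult.left_commute)
  then show ?thesis using e1 mpos S1 unfolding Rm_def S_def[symmetric] by (simp add: field_simps)
qed

lemma Rm_pos: "Rm m l a > 0"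
  unfolding Rm_def Sf_def using mpos lpos by (simp add: add_pos_nonneg)

lemma K_mono: assumes "a \<noteq> 0" "x < y" shows "Kf m l a x < Kf m l a y"
proof -
  have "(Pf m l a - Qf m a) * (y - x) > 0" using PQ[OF assms(1)] assms(2) by simp
  also have "(Pf m l a - Qf m a) * (y - x) \<le> Kf m l a y - Kf m l a x"
  proof -
    have "Pf m l a * (y - x) \<le> Pf m l a * (sinh y - sinh x)"
      using sinh_diff_ge[of x y] assms PQ[OF assms(1)] Q_pos[OF assms(1)]
      by (intro mult_left_mono) auto
    then show ?thesis unfolding Kf_def by (simp add: algebra_simps)
  qed
  finally show ?thesis by simp
qed

lemma K_inj: "a \<noteq> 0 \<Longrightarrow> Kf m l a x = Kf m l a y \<Longrightarrow> x = y"
  using K_mono[of a x y] K_mono[of a y x] by (cases x y rule: linorder_cases) auto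

lemma K_odd: "Kf m l a (-x) = - Kf m l a x"
  unfolding Kf_def by simp

lemma K_0: "Kf m l a 0 = 0" unfolding Kf_def by simp

lemma K_lower: assumes "a \<noteq> 0" "x \<ge> 0" shows "Kf m l a x \<ge> (Pf m l a - Qf m a) * x"
proof -
  have "Pf m l a * x \<le> Pf m l a * sinh x"
    using sinh_diff_ge[of 0 x] assms PQ[OF assms(1)] Q_pos[OF assms(1)]
    by (intro mult_left_mono) auto
  then show ?thesis unfolding Kf_def by (simp add: algebra_simps)
qed

lemma K_cont: "continuous_on S (Kf m l a)"
  unfolding Kf_def by (intro continuous_intros)

lemma K_surj: assumes "a \<noteq> 0" shows "\<exists>\<xi>. Kf m l a \<xi> = s"
proof -
  define d where "d = Pf m l a - Qf m a"
  have d: "d > 0" using PQ[OF assms] d_def by simp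
  define b where "b = \<bar>s\<bar> / d"
  have b: "b \<ge> 0" using d b_def by simp
  have up: "Kf m l a b \<ge> s"
    using K_lower[OF assms b] d b_def by (simp add: d_def[symmetric])
  have lo: "Kf m l a (-b) \<le> s"
    using K_lower[OF assms b] d b_def K_odd[of a b] by (simp add: d_def[symmetric])
  have "-b \<le> b" using b by simp
  have "\<forall>x. -b \<le> x \<and> x \<le> b \<longrightarrow> isCont (Kf m l a) x"
    unfolding Kf_def by (auto intro!: continuous_intros)
  from IVT[of "Kf m l a" "-b" s b, OF lo up \<open>-b \<le> b\<close> this]
  show ?thesis by blast
qed

end



context kep begin

lemma K_Xi: assumes "a \<noteq> 0" shows "Kf m l a (Xi m l s a) = s"
proof -
  have "\<exists>!\<xi>. Kf m l a \<xi> = s" using K_surj[OF assms] K_inj[OF assms] by blast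
  then show ?thesis unfolding Xi_def by (rule theI')
qed

lemma Xi_K: assumes "a \<noteq> 0" shows "Xi m l (Kf m l a \<xi>) a = \<xi>"
  using K_inj[OF assms K_Xi[OF assms]] .

lemma Xi_pos: assumes "a \<noteq> 0" "s > 0" shows "Xi m l s a > 0"
proof (rule ccontr)
  assume "\<not> ?thesis"
  then have "Xi m l s a \<le> 0" by simp
  then have "Kf m l a (Xi m l s a) \<le> Kf m l a 0"
    using K_mono[OF assms(1), of "Xi m l s a" 0] by (cases "Xi m l s a = 0") auto
  then show False using K_Xi[OF assms(1)] K_0 assms(2) by simp
qed

lemma Xi_neg: assumes "a \<noteq> 0" "s < 0" shows "Xi m l s a < 0"
proof (rule ccontr)
  assume "\<not> ?thesis"
  then have "Xi m l s a \<ge> 0" by simp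
  then have "Kf m l a (Xi m l s a) \<ge> Kf m l a 0"
    using K_mono[OF assms(1), of 0 "Xi m l s a"] by (cases "Xi m l s a = 0") auto
  then show False using K_Xi[OF assms(1)] K_0 assms(2) by simp
qed

lemma Xi_zero: assumes "a \<noteq> 0" shows "Xi m l 0 a = 0"
  using Xi_K[OF assms, of 0] K_0 by simp

lemma K_abs: "Kf m l a \<bar>x\<bar> = \<bar>Kf m l a x\<bar>" if "a \<noteq> 0"
proof (cases "x \<ge> 0")
  case True
  then have "Kf m l a x \<ge> Kf m l a 0" using K_mono[OF that, of 0 x] by (cases "x = 0") auto
  then show ?thesis using True K_0 by simp
next
  case False
  then have "Kf m l a x \<le> Kf m l a 0" using K_mono[OF that, of x 0] by auto
  then show ?thesis using False K_0 K_odd[of a x] by simp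
qed

lemma kappa_eq: "a \<noteq> 0 \<Longrightarrow> kappa m a l = 1 / Sf m l a"
  unfolding kappa_def Sf_def by simp

lemma pp_eq: "a \<noteq> 0 \<Longrightarrow> pp m a l = Pf m l a"
  unfolding pp_def kappa_eq Pf_def Qf_def by simp

lemma ppk: "a \<noteq> 0 \<Longrightarrow> pp m a l * kappa m a l = Qf m a"
  using S_gt1[of a] unfolding pp_eq kappa_eq Pf_def by simp

lemma Gk_cosh: assumes "\<eta> \<ge> 0" shows "Gk k (cosh \<eta>) = sinh \<eta> - k * \<eta>"
proof -
  have "(cosh \<eta>)\<^sup>2 - 1 = (sinh \<eta>)\<^sup>2" using cosh_square_eq[of \<eta>] by simp
  then have "sqrt ((cosh \<eta>)\<^sup>2 - 1) = sinh \<eta>" using assms by simp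
  moreover have "ln (cosh \<eta> + sinh \<eta>) = \<eta>" by (simp add: cosh_plus_sinh)
  ultimately show ?thesis unfolding Gk_def by simp
qed

lemma Hk_eq: assumes "a \<noteq> 0"
  shows "Hk (kappa m a l) (\<bar>s\<bar> / Pf m l a) = cosh (Xi m l s a)"
proof -
  define k where "k = kappa m a l"
  define P where "P = Pf m l a"
  define Q where "Q = Qf m a"
  have P0: "P > 0" using PQ[OF assms] Q_pos[OF assms] P_def Q_def by simp
  have kPQ: "k * P = Q" using ppk[OF assms] pp_eq[OF assms] k_def P_def Q_def by (simp add: mult.commute)
  define x where "x = Xi m l s a"
  have Kx: "P * sinh \<bar>x\<bar> - Q * \<bar>x\<bar> = \<bar>s\<bar>"
    using K_abs[OF assms, of x] K_Xi[OF assms, of s] unfolding x_def Kf_def P_def Q_def by simp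
  have G: "Gk k y = (P * sinh (arcosh y) - Q * arcosh y) / P" if "y \<ge> 1" for y
  proof -
    have "Gk k y = Gk k (cosh (arcosh y))" using that by simp
    also have "\<dots> = sinh (arcosh y) - k * arcosh y" using that by (intro Gk_cosh) simp
    finally have "Gk k y = sinh (arcosh y) - k * arcosh y" .
    then have "P * Gk k y = P * sinh (arcosh y) - (k * P) * arcosh y" by (simp add: right_diff_distrib)
    then have "P * Gk k y = P * sinh (arcosh y) - Q * arcosh y" using kPQ by simp
    then show ?thesis using P0 by (simp add: field_simps)
  qed
  have ex: "1 \<le> cosh x \<and> Gk k (cosh x) = \<bar>s\<bar> / P"
  proof -
    have "Gk k (cosh x) = Gk k (cosh \<bar>x\<bar>)" by simp
    also have "\<dots> = sinh \<bar>x\<bar> - k * \<bar>x\<bar>" by (rule Gk_cosh) simp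
    also have "\<dots> = \<bar>s\<bar> / P"
    proof -
      have "P * (sinh \<bar>x\<bar> - k * \<bar>x\<bar>) = P * sinh \<bar>x\<bar> - (k * P) * \<bar>x\<bar>" by (simp add: algebra_simps)
      also have "\<dots> = \<bar>s\<bar>" using Kx kPQ by simp
      finally show ?thesis using P0 by (simp add: eq_divide_eq mult.commute)
    qed
    finally show ?thesis using cosh_real_ge_1 by simp
  qed
  have un: "y = cosh x" if "1 \<le> y \<and> Gk k y = \<bar>s\<bar> / P" for y
  proof -
    have "Kf m l a (arcosh y) = P * sinh (arcosh y) - Q * arcosh y" unfolding Kf_def P_def Q_def ..
    also have "\<dots> = P * Gk k y" using G[of y] that P0 by simp
    also have "\<dots> = \<bar>s\<bar>" using that P0 by simp
    also have "\<dots> = Kf m l a \<bar>x\<bar>" using Kx unfolding Kf_def P_def Q_def by simp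
    finally have "Kf m l a (arcosh y) = Kf m l a \<bar>x\<bar>" .
    then have "arcosh y = \<bar>x\<bar>" using K_inj[OF assms] by blast
    then have "cosh (arcosh y) = cosh x" by simp
    then show ?thesis using that by simp
  qed
  have "Hk k (\<bar>s\<bar> / P) = cosh x" unfolding Hk_def
    using ex un by (rule the_equality)
  then show ?thesis unfolding k_def P_def x_def .
qed

lemma RR_eq: assumes "a \<noteq> 0" shows "RR m s a l = Rf m l s a"
  unfolding RR_def Rf_def using Hk_eq[OF assms, of s] pp_eq[OF assms] ppk[OF assms] by simp

end



lemma sinh_rd: "(sinh has_real_derivative cosh x) (at x)"
  by (auto intro!: derivative_eq_intros)
lemma cosh_rd: "(cosh has_real_derivative sinh x) (at x)"
  by (auto intro!: derivative_eq_intros)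

lemma comp_snd_deriv:
  fixes \<phi> :: "real \<Rightarrow> real" and z :: "real \<times> real"
  assumes "(\<phi> has_real_derivative D) (at (snd z))"
  shows "((\<lambda>z. \<phi> (snd z)) has_derivative (\<lambda>h. D * snd h)) (at z)"
proof -
  have s: "(snd has_derivative snd) (at z)" by (rule bounded_linear_imp_has_derivative[OF bounded_linear_snd])
  have p: "(\<phi> has_derivative (*) D) (at (snd z))" using assms by (rule has_field_derivative_imp_has_derivative)
  from diff_chain_at[OF s p] show ?thesis by (simp add: o_def)
qed

lemma comp_fst_deriv:
  fixes \<phi> :: "real \<Rightarrow> real" and z :: "real \<times> real"
  assumes "(\<phi> has_real_derivative D) (at (fst z))"
  shows "((\<lambda>z. \<phi> (fst z)) has_derivative (\<lambda>h. D * fst h)) (at z)"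
proof -
  have s: "(fst has_derivative fst) (at z)" by (rule bounded_linear_imp_has_derivative[OF bounded_linear_fst])
  have p: "(\<phi> has_derivative (*) D) (at (fst z))" using assms by (rule has_field_derivative_imp_has_derivative)
  from diff_chain_at[OF s p] show ?thesis by (simp add: o_def)
qed

definition Qd :: "real \<Rightarrow> real \<Rightarrow> real" where "Qd m a = - m / a ^ 3"
definition Sd :: "real \<Rightarrow> real \<Rightarrow> real \<Rightarrow> real" where "Sd m l a = 4 * a * l / (m\<^sup>2 * Sf m l a)"
definition Pd :: "real \<Rightarrow> real \<Rightarrow> real \<Rightarrow> real" where
  "Pd m l a = Qd m a * Sf m l a + Qf m a * Sd m l a"

context kep begin

lemma Q_deriv: assumes "a \<noteq> 0" shows "((\<lambda>a. Qf m a) has_real_derivative Qd m a) (at a)"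
  unfolding Qf_def Qd_def using assms
  by (auto intro!: derivative_eq_intros simp: field_simps power2_eq_square power3_eq_cube)

lemma S_deriv: assumes "a \<noteq> 0" shows "((\<lambda>a. Sf m l a) has_real_derivative Sd m l a) (at a)"
proof -
  have "1 + 4 * a\<^sup>2 * l / m\<^sup>2 > 0" using mpos lpos by (simp add: add_pos_nonneg)
  then show ?thesis unfolding Sf_def Sd_def using mpos
    by (auto intro!: derivative_eq_intros simp: field_simps power2_eq_square)
qed

lemma P_deriv: assumes "a \<noteq> 0" shows "((\<lambda>a. Pf m l a) has_real_derivative Pd m l a) (at a)"
  unfolding Pf_def Pd_def
  by (rule derivative_eq_intros Q_deriv S_deriv assms | simp)+

definition ff :: "real \<times> real \<Rightarrow> real \<times> real" where
  "ff z = (Kf m l (snd z) (fst z), snd z)"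
definition gg :: "real \<times> real \<Rightarrow> real \<times> real" where
  "gg z = (Xi m l (fst z) (snd z), snd z)"

definition den :: "real \<Rightarrow> real \<Rightarrow> real" where
  "den \<xi> a = Pf m l a * cosh \<xi> - Qf m a"
definition cr :: "real \<Rightarrow> real \<Rightarrow> real" where
  "cr \<xi> a = Pd m l a * sinh \<xi> - Qd m a * \<xi>"

lemma den_pos: "a \<noteq> 0 \<Longrightarrow> den \<xi> a > 0"
proof -
  assume a: "a \<noteq> 0"
  have "Pf m l a * 1 \<le> Pf m l a * cosh \<xi>"
    using PQ[OF a] Q_pos[OF a] cosh_real_ge_1[of \<xi>] by (intro mult_left_mono) auto
  then show ?thesis using PQ[OF a] unfolding den_def by simp
qed

lemma ff_deriv: assumes "a \<noteq> 0"
  shows "(ff has_derivative (\<lambda>h. (den \<xi> a * fst h + cr \<xi> a * snd h, snd h))) (at (\<xi>, a))"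
proof -
  have P: "((\<lambda>z. Pf m l (snd z)) has_derivative (\<lambda>h. Pd m l a * snd h)) (at (\<xi>, a))"
    using comp_snd_deriv[of "Pf m l" "Pd m l a" "(\<xi>, a)"] P_deriv[OF assms] by simp
  have Q: "((\<lambda>z. Qf m (snd z)) has_derivative (\<lambda>h. Qd m a * snd h)) (at (\<xi>, a))"
    using comp_snd_deriv[of "Qf m" "Qd m a" "(\<xi>, a)"] Q_deriv[OF assms] by simp
  have Sh: "((\<lambda>z. sinh (fst z)) has_derivative (\<lambda>h. cosh \<xi> * fst h)) (at (\<xi>, a))"
    using comp_fst_deriv[of sinh "cosh \<xi>" "(\<xi>, a)"] by (simp add: sinh_rd)
  have F: "((\<lambda>z. fst z) has_derivative (\<lambda>h. fst h)) (at (\<xi>, a))"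
    by (rule bounded_linear_imp_has_derivative[OF bounded_linear_fst])
  have S: "((\<lambda>z. snd z) has_derivative (\<lambda>h. snd h)) (at (\<xi>, a))"
    by (rule bounded_linear_imp_has_derivative[OF bounded_linear_snd])
  have K: "((\<lambda>z. Pf m l (snd z) * sinh (fst z) - Qf m (snd z) * fst z) has_derivative
     (\<lambda>h. Pf m l a * (cosh \<xi> * fst h) + Pd m l a * snd h * sinh \<xi> - (Qf m a * fst h + Qd m a * snd h * \<xi>))) (at (\<xi>, a))"
    using has_derivative_diff[OF has_derivative_mult[OF P Sh] has_derivative_mult[OF Q F]] by simp
  have "(ff has_derivative (\<lambda>h. (Pf m l a * (cosh \<xi> * fst h) + Pd m l a * snd h * sinh \<xi> - (Qf m a * fst h + Qd m a * snd h * \<xi>), snd h))) (at (\<xi>, a))"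
    unfolding ff_def Kf_def using has_derivative_Pair[OF K S] by simp
  then show ?thesis
    by (rule has_derivative_eq_rhs) (auto simp: den_def cr_def algebra_simps)
qed

lemma gg_ff: "z \<in> UNIV \<times> {0<..} \<Longrightarrow> gg (ff z) = z"
  unfolding gg_def ff_def by (cases z) (auto simp: Xi_K)

lemma ff_cont: "continuous_on (UNIV \<times> {0<..}) ff"
proof (rule continuous_at_imp_continuous_on, rule ballI)
  fix z :: "real \<times> real" assume "z \<in> UNIV \<times> {0<..}"
  then obtain \<xi> a where z: "z = (\<xi>, a)" and "a \<noteq> 0" by (cases z) auto
  from has_derivative_continuous[OF ff_deriv[OF this(2), of \<xi>]] show "isCont ff z" unfolding z .
qed

lemma gg_deriv: assumes "a > 0"
  shows "(gg has_derivative (\<lambda>h. ((fst h - cr (Xi m l s a) a * snd h) / den (Xi m l s a) a, snd h))) (at (s, a))"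
proof -
  define \<xi> where "\<xi> = Xi m l s a"
  have a0: "a \<noteq> 0" using assms by simp
  have fx: "ff (\<xi>, a) = (s, a)" unfolding ff_def \<xi>_def using K_Xi[OF a0] by simp
  have op: "open (UNIV \<times> {0<..} :: (real \<times> real) set)" by (intro open_Times) auto
  have d: "den \<xi> a \<noteq> 0" using den_pos[OF a0, of \<xi>] by linarith
  have "(gg has_derivative (\<lambda>h. ((fst h - cr \<xi> a * snd h) / den \<xi> a, snd h))) (at (ff (\<xi>, a)))"
  proof (rule has_derivative_inverse_strong[OF op _ ff_cont gg_ff ff_deriv[OF a0]])
    show "(\<xi>, a) \<in> UNIV \<times> {0<..}" using assms by simp
    show "(\<lambda>h. (den \<xi> a * fst h + cr \<xi> a * snd h, snd h)) \<circ> (\<lambda>h. ((fst h - cr \<xi> a * snd h) / den \<xi> a, snd h)) = id"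
      using d by (auto simp: fun_eq_iff field_simps)
  qed auto
  then show ?thesis using fx \<xi>_def by simp
qed

definition Rs :: "real \<Rightarrow> real \<Rightarrow> real" where
  "Rs s a = Pf m l a * sinh (Xi m l s a) / den (Xi m l s a) a"
definition Ra :: "real \<Rightarrow> real \<Rightarrow> real" where
  "Ra s a = Pd m l a * cosh (Xi m l s a) - Qd m a
     - Pf m l a * sinh (Xi m l s a) * cr (Xi m l s a) a / den (Xi m l s a) a"

lemma R_deriv: assumes "a > 0"
  shows "((\<lambda>z. Rf m l (fst z) (snd z)) has_derivative (\<lambda>h. Rs s a * fst h + Ra s a * snd h)) (at (s, a))"
proof -
  define \<xi> where "\<xi> = Xi m l s a"
  have a0: "a \<noteq> 0" using assms by simp
  have P: "((\<lambda>z. Pf m l (snd z)) has_derivative (\<lambda>h. Pd m l a * snd h)) (at (s, a))"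
    using comp_snd_deriv[of "Pf m l" "Pd m l a" "(s, a)"] P_deriv[OF a0] by simp
  have Q: "((\<lambda>z. Qf m (snd z)) has_derivative (\<lambda>h. Qd m a * snd h)) (at (s, a))"
    using comp_snd_deriv[of "Qf m" "Qd m a" "(s, a)"] Q_deriv[OF a0] by simp
  have G: "((\<lambda>z. fst (gg z)) has_derivative (\<lambda>h. (fst h - cr \<xi> a * snd h) / den \<xi> a)) (at (s, a))"
    using has_derivative_fst[OF gg_deriv[OF assms, of s]] \<xi>_def by simp
  have gs: "fst (gg (s, a)) = \<xi>" unfolding gg_def \<xi>_def by simp
  have C: "((\<lambda>z. cosh (fst (gg z))) has_derivative (\<lambda>h. sinh \<xi> * ((fst h - cr \<xi> a * snd h) / den \<xi> a))) (at (s, a))"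
  proof -
    have c: "(cosh has_derivative (*) (sinh \<xi>)) (at (fst (gg (s, a))))"
      unfolding gs by (rule has_field_derivative_imp_has_derivative) (rule cosh_rd)
    from diff_chain_at[OF G c] show ?thesis by (simp add: o_def)
  qed
  have "((\<lambda>z. Pf m l (snd z) * cosh (fst (gg z)) - Qf m (snd z)) has_derivative
     (\<lambda>h. Pf m l a * (sinh \<xi> * ((fst h - cr \<xi> a * snd h) / den \<xi> a)) + Pd m l a * snd h * cosh (fst (gg (s,a))) - Qd m a * snd h)) (at (s, a))"
    using has_derivative_diff[OF has_derivative_mult[OF P C] Q] by simp
  then have "((\<lambda>z. Rf m l (fst z) (snd z)) has_derivative
     (\<lambda>h. Pf m l a * (sinh \<xi> * ((fst h - cr \<xi> a * snd h) / den \<xi> a)) + Pd m l a * snd h * cosh \<xi> - Qd m a * snd h)) (at (s, a))"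
    unfolding Rf_def gg_def gs by (simp add: \<xi>_def[symmetric])
  moreover have d: "den \<xi> a \<noteq> 0" using den_pos[OF a0, of \<xi>] by linarith
  ultimately show ?thesis
    by (intro has_derivative_eq_rhs[of _ _ _ "(\<lambda>h. Rs s a * fst h + Ra s a * snd h)"])
       (auto simp: fun_eq_iff Rs_def Ra_def \<xi>_def[symmetric] field_simps)
qed

end



context kep begin

lemma R_chain:
  fixes g1 g2 :: "real \<Rightarrow> real"
  assumes g1: "(g1 has_real_derivative d1) (at x within S)"
    and g2: "(g2 has_real_derivative d2) (at x within S)"
    and pos: "g2 x > 0"
  shows "((\<lambda>y. Rf m l (g1 y) (g2 y)) has_real_derivative
           (Rs (g1 x) (g2 x) * d1 + Ra (g1 x) (g2 x) * d2)) (at x within S)"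
proof -
  have c: "((\<lambda>y. (g1 y, g2 y)) has_derivative (\<lambda>h. (h * d1, h * d2))) (at x within S)"
    using has_derivative_Pair[OF g1[unfolded has_field_derivative_def] g2[unfolded has_field_derivative_def]]
    by (simp add: mult.commute)
  have r: "((\<lambda>z. Rf m l (fst z) (snd z)) has_derivative
     (\<lambda>h. Rs (g1 x) (g2 x) * fst h + Ra (g1 x) (g2 x) * snd h)) (at (g1 x, g2 x) within ((\<lambda>y. (g1 y, g2 y)) ` S))"
    using R_deriv[OF pos, of "g1 x"] by (rule has_derivative_at_withinI)
  from diff_chain_within[OF c r] have
    "((\<lambda>y. Rf m l (g1 y) (g2 y)) has_derivative (\<lambda>h. Rs (g1 x) (g2 x) * (h * d1) + Ra (g1 x) (g2 x) * (h * d2))) (at x within S)"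
    by (simp add: o_def)
  then show ?thesis
    unfolding has_field_derivative_def
    by (rule has_derivative_eq_rhs) (auto simp: fun_eq_iff algebra_simps)
qed

lemma dth_eq: assumes "a > 0" shows "dth_Rtil m l t \<theta> a = Rs (\<theta> + a * t) a"
proof -
  have "((\<lambda>y. Rf m l (y + a * t) a) has_real_derivative
           (Rs (\<theta> + a * t) a * 1 + Ra (\<theta> + a * t) a * 0)) (at \<theta>)"
    by (rule R_chain) (auto intro!: derivative_eq_intros simp: assms)
  moreover have "(\<lambda>\<theta>'. Rtil m l t \<theta>' a) = (\<lambda>y. Rf m l (y + a * t) a)"
    using assms by (auto simp: fun_eq_iff Rtil_def RR_eq)
  ultimately show ?thesis unfolding dth_Rtil_def by (simp add: DERIV_imp_deriv)
qed

lemma da_eq: assumes "a > 0" shows "da_Rtil m l t \<theta> a = t * Rs (\<theta> + a * t) a + Ra (\<theta> + a * t) a"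
proof -
  have "((\<lambda>y. Rf m l (\<theta> + y * t) y) has_real_derivative
           (Rs (\<theta> + a * t) a * t + Ra (\<theta> + a * t) a * 1)) (at a)"
    by (rule R_chain) (auto intro!: derivative_eq_intros simp: assms)
  then have "((\<lambda>a'. Rtil m l t \<theta> a') has_real_derivative
           (Rs (\<theta> + a * t) a * t + Ra (\<theta> + a * t) a * 1)) (at a)"
    by (rule has_field_derivative_transform_within_open[where S="{0<..}"])
       (use assms in \<open>auto simp: Rtil_def RR_eq\<close>)
  then show ?thesis unfolding da_Rtil_def by (simp add: DERIV_imp_deriv algebra_simps)
qed

lemma Rs_sign: assumes "a > 0"
  shows "sgn s * Rs s a = \<bar>Rs s a\<bar>" and "s = 0 \<Longrightarrow> Rs s a = 0"
proof -
  have a0: "a \<noteq> 0" using assms by simp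
  have d: "den (Xi m l s a) a > 0" by (rule den_pos[OF a0])
  have P: "Pf m l a > 0" using PQ[OF a0] Q_pos[OF a0] by simp
  show "sgn s * Rs s a = \<bar>Rs s a\<bar>"
  proof (cases s "0::real" rule: linorder_cases)
    case less
    then have "Xi m l s a < 0" using Xi_neg[OF a0] by simp
    then have "Rs s a < 0" unfolding Rs_def using d P by (simp add: divide_neg_pos mult_pos_neg)
    then show ?thesis using less by simp
  next
    case equal then show ?thesis by (simp add: Rs_def Xi_zero[OF a0])
  next
    case greater
    then have "Xi m l s a > 0" using Xi_pos[OF a0] by simp
    then have "Rs s a > 0" unfolding Rs_def using d P by simp
    then show ?thesis using greater by simp
  qed
  show "Rs s a = 0" if "s = 0" using that by (simp add: Rs_def Xi_zero[OF a0])
qed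

lemma Rf_ge: assumes "a > 0" shows "Rf m l s a \<ge> Rm m l a"
proof -
  have a0: "a \<noteq> 0" using assms by simp
  have "Pf m l a * 1 \<le> Pf m l a * cosh (Xi m l s a)"
    using PQ[OF a0] Q_pos[OF a0] cosh_real_ge_1 by (intro mult_left_mono) auto
  then show ?thesis using Rm_eq[OF a0] unfolding Rf_def by simp
qed

lemma Rf_0: assumes "a > 0" shows "Rf m l 0 a = Rm m l a"
  using Rm_eq[of a] Xi_zero[of a] assms unfolding Rf_def by simp

lemma Rf_pos: "a > 0 \<Longrightarrow> Rf m l s a > 0"
  using Rf_ge[of a s] Rm_pos[of a] by simp

end



definition Rmd :: "real \<Rightarrow> real \<Rightarrow> real \<Rightarrow> real" where
  "Rmd m l a = - 2 * a * (Rm m l a)\<^sup>2 / (m * Sf m l a)"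

context kep begin

lemma S_pos: "Sf m l a \<ge> 1"
  unfolding Sf_def using mpos lpos by simp

lemma Rm_deriv: assumes "a \<noteq> 0" shows "((\<lambda>a. Rm m l a) has_real_derivative Rmd m l a) (at a)"
proof -
  define S where "S = Sf m l a"
  have S1: "S \<ge> 1" using S_pos S_def by simp
  have g: "((\<lambda>a. m * (1 + Sf m l a)) has_real_derivative m * (0 + Sd m l a)) (at a)"
    by (intro DERIV_cmult DERIV_add DERIV_const S_deriv[OF assms])
  have nz: "m * (1 + Sf m l a) \<noteq> 0" using mpos S_pos[of a] by simp
  have "((\<lambda>a. 2 * l / (m * (1 + Sf m l a))) has_real_derivative
     (0 * (m * (1 + Sf m l a)) - 2 * l * (m * (0 + Sd m l a))) / ((m * (1 + Sf m l a)) * (m * (1 + Sf m l a)))) (at a)"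
    by (rule DERIV_divide[OF DERIV_const g nz])
  moreover have "(0 * (m * (1 + Sf m l a)) - 2 * l * (m * (0 + Sd m l a))) / ((m * (1 + Sf m l a)) * (m * (1 + Sf m l a))) = Rmd m l a"
  proof -
    have "(0 * (m * (1 + S)) - 2 * l * (m * (0 + 4 * a * l / (m\<^sup>2 * S)))) / ((m * (1 + S)) * (m * (1 + S)))
       = - 2 * a * (2 * l / (m * (1 + S)))\<^sup>2 / (m * S)"
      using mpos S1 by (simp add: field_simps power2_eq_square)
    then show ?thesis unfolding Rmd_def Rm_def Sd_def S_def by simp
  qed
  ultimately show ?thesis unfolding Rm_def by simp
qed

lemma Rmd_bound: assumes "a > 0" "0 \<le> E" "E \<le> m / 4"
  shows "E * \<bar>Rmd m l a\<bar> / (1 + (Rm m l a)\<^sup>2) \<le> a / 2"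
proof -
  define S where "S = Sf m l a"
  define r where "r = Rm m l a"
  have S1: "S \<ge> 1" using S_pos S_def by simp
  have r0: "r > 0" using Rm_pos r_def by simp
  have "\<bar>Rmd m l a\<bar> = 2 * a * r\<^sup>2 / (m * S)"
    unfolding Rmd_def r_def[symmetric] S_def[symmetric] using assms mpos S1 by simp
  also have "\<dots> \<le> 2 * a * r\<^sup>2 / m"
    using S1 assms mpos by (intro divide_left_mono) (auto intro!: mult_pos_pos)
  finally have b1: "\<bar>Rmd m l a\<bar> \<le> 2 * a * r\<^sup>2 / m" .
  have "E * \<bar>Rmd m l a\<bar> / (1 + r\<^sup>2) \<le> E * (2 * a * r\<^sup>2 / m) / (1 + r\<^sup>2)"
    using b1 assms by (intro divide_right_mono mult_left_mono) (auto simp: add_pos_nonneg)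
  also have "\<dots> = (E * 2 * a / m) * (r\<^sup>2 / (1 + r\<^sup>2))" by (simp add: field_simps)
  also have "\<dots> \<le> (E * 2 * a / m) * 1"
    using assms mpos by (intro mult_left_mono) (auto simp: add_pos_nonneg)
  also have "\<dots> \<le> a / 2" using assms mpos by (simp add: field_simps)
  finally show ?thesis unfolding r_def .
qed

lemma Rm_mono: assumes "0 < a" "a \<le> b" shows "Rm m l b \<le> Rm m l a"
proof -
  have "a\<^sup>2 \<le> b\<^sup>2" using assms by (intro power_mono) auto
  then have "4 * a\<^sup>2 * l / m\<^sup>2 \<le> 4 * b\<^sup>2 * l / m\<^sup>2"
    using lpos mpos by (intro divide_right_mono mult_right_mono) auto
  then have S: "Sf m l a \<le> Sf m l b" unfolding Sf_def by (intro real_sqrt_le_mono) simp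
  have "m * (1 + Sf m l a) \<le> m * (1 + Sf m l b)" using S mpos by simp
  moreover have "0 < m * (1 + Sf m l b) * (m * (1 + Sf m l a))"
    using mpos S_pos[of a] S_pos[of b] by (intro mult_pos_pos) auto
  ultimately have "2 * l / (m * (1 + Sf m l b)) \<le> 2 * l / (m * (1 + Sf m l a))"
    using lpos by (intro divide_left_mono) auto
  then show ?thesis unfolding Rm_def .
qed

lemma Rm_inv_bound: assumes "a > 0" shows "1 / Rm m l a \<le> m / l + a / sqrt l"
proof -
  define S where "S = Sf m l a"
  define q where "q = sqrt l"
  have q: "q > 0" "q\<^sup>2 = l" using lpos q_def by auto
  have S2: "S\<^sup>2 = 1 + 4 * a\<^sup>2 * l / m\<^sup>2" unfolding S_def Sf_def using mpos lpos by simp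
  have "(1 + 2 * a * q / m)\<^sup>2 = 1 + 4 * a * q / m + 4 * a\<^sup>2 * q\<^sup>2 / m\<^sup>2"
    using mpos by (simp add: power2_eq_square field_simps)
  then have "(1 + 2 * a * q / m)\<^sup>2 = 1 + 4 * a * q / m + 4 * a\<^sup>2 * l / m\<^sup>2"
    using q(2) by simp
  moreover have "4 * a * q / m \<ge> 0" using assms mpos q by simp
  ultimately have "S\<^sup>2 \<le> (1 + 2 * a * q / m)\<^sup>2" using S2 by linarith
  moreover have "0 \<le> 1 + 2 * a * q / m" using mpos q assms by simp
  ultimately have S: "S \<le> 1 + 2 * a * q / m" by (rule power2_le_imp_le)
  have e: "1 / Rm m l a = m * (1 + S) / (2 * l)" unfolding Rm_def S_def using mpos lpos by simp
  have "m * (1 + S) \<le> m * (2 + 2 * a * q / m)" using S mpos by simp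
  then have "m * (1 + S) / (2 * l) \<le> m * (2 + 2 * a * q / m) / (2 * l)"
    using lpos by (simp add: divide_right_mono)
  also have "m * (2 + 2 * a * q / m) / (2 * l) = m / l + a * q / l"
    using mpos lpos by (simp add: field_simps)
  also have "a * q / l = a / q"
  proof -
    have "a * q / l = a * q / (q * q)" using q(2) by (simp add: power2_eq_square)
    also have "\<dots> = a / q" using q(1) by simp
    finally show ?thesis .
  qed
  finally show ?thesis using e q_def by simp
qed

end



lemma deriv_squeeze:
  fixes f g :: "real \<Rightarrow> real"
  assumes f0: "f t = 0" and g0: "g t = 0" and le: "\<And>y. y \<in> S \<Longrightarrow> \<bar>f y\<bar> \<le> g y"
    and gd: "(g has_real_derivative 0) (at t within S)"
  shows "(f has_real_derivative 0) (at t within S)"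
proof -
  have G: "((\<lambda>y. (g y - g t) / (y - t)) \<longlongrightarrow> 0) (at t within S)"
    using gd unfolding has_field_derivative_iff .
  have ev: "eventually (\<lambda>y. norm ((f y - f t) / (y - t)) \<le> norm ((g y - g t) / (y - t)) * 1) (at t within S)"
    unfolding eventually_at_filter
  proof (rule always_eventually, intro allI impI)
    fix y assume "y \<noteq> t" "y \<in> S"
    then have "\<bar>f y\<bar> \<le> \<bar>g y\<bar>" using le[of y] by simp
    then show "norm ((f y - f t) / (y - t)) \<le> norm ((g y - g t) / (y - t)) * 1"
      using f0 g0 by (simp add: abs_divide divide_right_mono)
  qed
  show ?thesis unfolding has_field_derivative_iff using tendsto_0_le[OF G ev] by simp
qed

lemma mono_within:
  fixes V Vd :: "real \<Rightarrow> real"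
  assumes d: "\<And>t. t \<in> {0..T} \<Longrightarrow> (V has_real_derivative Vd t) (at t within {0..T})"
    and nn: "\<And>t. t \<in> {0..T} \<Longrightarrow> Vd t \<ge> 0"
    and x: "x \<in> {0..T}"
  shows "V 0 \<le> V x"
proof -
  have c: "continuous_on {0..T} V"
    unfolding continuous_on_eq_continuous_within using d DERIV_continuous by blast
  have x0: "0 \<le> x" using x by simp
  have cx: "continuous_on {0..x} V" by (rule continuous_on_subset[OF c]) (use x in auto)
  have dd: "\<exists>yy. (V has_real_derivative yy) (at y) \<and> yy \<ge> 0" if y: "0 < y" "y < x" for y
  proof -
    have "at y within {0..T} = at y" using x y by (intro at_within_Icc_at) auto
    then show ?thesis using d[of y] nn[of y] y x by auto
  qed
  show ?thesis by (rule DERIV_nonneg_imp_increasing_open[OF x0 dd cx])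
qed

lemma Vd_nonneg:
  fixes a E lam Fv X \<sigma> Rt Rmv Rmdv :: real
  assumes a: "a > 0" and E: "E \<ge> 0"
    and sX: "\<sigma> * X = \<bar>X\<bar>" and s1: "\<bar>\<sigma>\<bar> \<le> 1"
    and u: "\<bar>lam * Fv\<bar> \<le> E / (1 + Rt\<^sup>2)"
    and rb: "E * \<bar>Rmdv\<bar> / (1 + Rmv\<^sup>2) \<le> a / 2"
  shows "0 \<le> 2 * a * (lam * Fv * X) + 4 * E * (\<sigma> * (a * X / (1 + Rt\<^sup>2) - Rmdv * (lam * Fv * X) / (1 + Rmv\<^sup>2)))"
proof -
  define u where "u = lam * Fv"
  define w where "w = 1 + Rt\<^sup>2"
  define v where "v = 1 + Rmv\<^sup>2"
  have w: "w > 0" unfolding w_def by (simp add: add_pos_nonneg)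
  have v: "v > 0" unfolding v_def by (simp add: add_pos_nonneg)
  have u': "\<bar>u\<bar> \<le> E / w" using u unfolding u_def w_def .
  have rb': "E * \<bar>Rmdv\<bar> / v \<le> a / 2" using rb unfolding v_def .
  have t1: "2 * a * (u * X) \<ge> - (2 * a * (E / w) * \<bar>X\<bar>)"
  proof -
    have "\<bar>2 * a * (u * X)\<bar> = 2 * a * (\<bar>u\<bar> * \<bar>X\<bar>)" using a by (simp add: abs_mult)
    also have "\<dots> \<le> 2 * a * ((E / w) * \<bar>X\<bar>)" using u' a by (intro mult_left_mono mult_right_mono) auto
    finally show ?thesis by (simp add: abs_le_iff mult.assoc)
  qed
  have t2: "4 * E * (\<sigma> * (a * X / w)) = 4 * E * a * \<bar>X\<bar> / w"
  proof -
    have "\<sigma> * (a * X / w) = a * (\<sigma> * X) / w" by simp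
    then show ?thesis using sX by simp
  qed
  have t3: "\<bar>4 * E * (\<sigma> * (Rmdv * (u * X) / v))\<bar> \<le> 2 * a * (E / w) * \<bar>X\<bar>"
  proof -
    have "\<bar>4 * E * (\<sigma> * (Rmdv * (u * X) / v))\<bar> = 4 * \<bar>\<sigma>\<bar> * (E * \<bar>Rmdv\<bar> / v) * \<bar>u\<bar> * \<bar>X\<bar>"
      using E v by (simp add: abs_mult abs_divide)
    also have "\<dots> \<le> 4 * 1 * (a / 2) * (E / w) * \<bar>X\<bar>"
      using s1 rb' u' E v w a
      by (intro mult_right_mono mult_mono) (auto intro!: divide_nonneg_pos mult_nonneg_nonneg)
    finally show ?thesis by simp
  qed
  have "2 * a * (lam * Fv * X) + 4 * E * (\<sigma> * (a * X / (1 + Rt\<^sup>2) - Rmdv * (lam * Fv * X) / (1 + Rmv\<^sup>2)))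
     = 2 * a * (u * X) + 4 * E * (\<sigma> * (a * X / w)) - 4 * E * (\<sigma> * (Rmdv * (u * X) / v))"
    unfolding u_def w_def v_def by (simp add: algebra_simps)
  also have "\<dots> \<ge> - (2 * a * (E / w) * \<bar>X\<bar>) + 4 * E * a * \<bar>X\<bar> / w - 2 * a * (E / w) * \<bar>X\<bar>"
  proof -
    have gen: "\<And>A A' B B' C C' :: real. A' \<le> A \<Longrightarrow> B = B' \<Longrightarrow> C \<le> C' \<Longrightarrow> A' + B' - C' \<le> A + B - C"
      by linarith
    show ?thesis by (rule gen[OF t1 t2 abs_le_D1[OF t3]])
  qed
  moreover have "- (2 * a * (E / w) * \<bar>X\<bar>) + 4 * E * a * \<bar>X\<bar> / w - 2 * a * (E / w) * \<bar>X\<bar> = 0"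
    by (simp add: field_simps)
  ultimately show ?thesis by linarith
qed




definition sfun :: "(real \<Rightarrow> real) \<Rightarrow> (real \<Rightarrow> real) \<Rightarrow> real \<Rightarrow> real" where
  "sfun \<theta> a t = \<theta> t + a t * t"
definition phi :: "real \<Rightarrow> real \<Rightarrow> (real \<Rightarrow> real) \<Rightarrow> (real \<Rightarrow> real) \<Rightarrow> real \<Rightarrow> real" where
  "phi m l \<theta> a t = sgn (sfun \<theta> a t) * (arctan (Rf m l (sfun \<theta> a t) (a t)) - arctan (Rm m l (a t)))"

context kep begin

lemma phi_bound: assumes "a t > 0" shows "\<bar>phi m l \<theta> a t\<bar> \<le> pi/2 - arctan (Rm m l (a t))"
proof -
  define R where "R = Rf m l (sfun \<theta> a t) (a t)"
  have "R \<ge> Rm m l (a t)" using Rf_ge[OF assms] R_def by simp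
  then have d: "0 \<le> arctan R - arctan (Rm m l (a t))" by (simp add: arctan_le_iff)
  have "\<bar>phi m l \<theta> a t\<bar> = \<bar>sgn (sfun \<theta> a t)\<bar> * (arctan R - arctan (Rm m l (a t)))"
    unfolding phi_def R_def[symmetric] using d by (simp add: abs_mult)
  also have "\<dots> \<le> 1 * (arctan R - arctan (Rm m l (a t)))"
    using d by (intro mult_right_mono) (auto simp: abs_sgn_eq)
  also have "\<dots> \<le> pi/2 - arctan (Rm m l (a t))" using arctan_ubound[of R] by simp
  finally show ?thesis .
qed

lemma dyn:
  fixes \<theta> a :: "real \<Rightarrow> real" and F :: "real \<Rightarrow> real \<Rightarrow> real" and T lam E x :: real
  assumes lam: "lam > 0" and E: "0 \<le> E" "E \<le> m / 4"
    and hF: "\<And>t r. t \<in> {0..T} \<Longrightarrow> r > 0 \<Longrightarrow> lam * \<bar>F t r\<bar> \<le> E / (1 + r\<^sup>2)"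
    and ha: "\<And>t. t \<in> {0..T} \<Longrightarrow> a t > 0"
    and dth: "\<And>t. t \<in> {0..T} \<Longrightarrow> (\<theta> has_real_derivative
               (- lam * F t (Rtil m l t (\<theta> t) (a t)) * da_Rtil m l t (\<theta> t) (a t))) (at t within {0..T})"
    and dA: "\<And>t. t \<in> {0..T} \<Longrightarrow> (a has_real_derivative
               (lam * F t (Rtil m l t (\<theta> t) (a t)) * dth_Rtil m l t (\<theta> t) (a t))) (at t within {0..T})"
    and x: "x \<in> {0..T}"
  shows "(a 0)\<^sup>2 + 4 * E * phi m l \<theta> a 0 \<le> (a x)\<^sup>2 + 4 * E * phi m l \<theta> a x"
proof -
  define S :: "real set" where "S = {0..T}"
  define s where "s = sfun \<theta> a"
  define V where "V y = (a y)\<^sup>2 + 4 * E * phi m l \<theta> a y" for y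
  define Vd where "Vd t = 2 * a t * (lam * F t (Rf m l (s t) (a t)) * Rs (s t) (a t))
     + 4 * E * (sgn (s t) * (a t * Rs (s t) (a t) / (1 + (Rf m l (s t) (a t))\<^sup>2)
        - Rmd m l (a t) * (lam * F t (Rf m l (s t) (a t)) * Rs (s t) (a t)) / (1 + (Rm m l (a t))\<^sup>2)))" for t
  have main: "(V has_real_derivative Vd t) (at t within S) \<and> Vd t \<ge> 0" if t: "t \<in> S" for t
  proof -
    define aT where "aT = a t"
    define St where "St = s t"
    define Rv where "Rv = Rs St aT"
    define Av where "Av = Ra St aT"
    define Rt where "Rt = Rf m l St aT"
    define Fv where "Fv = F t Rt"
    have aT0: "aT > 0" using ha t S_def aT_def by simp
    have til: "Rtil m l t (\<theta> t) (a t) = Rt"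
      unfolding Rtil_def Rt_def St_def s_def sfun_def aT_def using RR_eq aT0 aT_def by simp
    define thd where "thd = - lam * Fv * (t * Rv + Av)"
    define ad where "ad = lam * Fv * Rv"
    have Hth: "(\<theta> has_real_derivative thd) (at t within S)"
      using dth[of t] t til da_eq[OF aT0, of t "\<theta> t"] unfolding S_def thd_def Fv_def Rv_def Av_def St_def s_def sfun_def aT_def
      by simp
    have Ha: "(a has_real_derivative ad) (at t within S)"
      using dA[of t] t til dth_eq[OF aT0, of t "\<theta> t"] unfolding S_def ad_def Fv_def Rv_def St_def s_def sfun_def aT_def
      by simp
    have Hs: "(s has_real_derivative thd + (ad * t + 1 * aT)) (at t within S)"
      unfolding s_def sfun_def aT_def
      by (rule DERIV_add[OF Hth DERIV_mult[OF Ha DERIV_ident]])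
    have HR0: "((\<lambda>y. Rf m l (s y) (a y)) has_real_derivative Rs (s t) (a t) * (thd + (ad * t + 1 * aT)) + Ra (s t) (a t) * ad) (at t within S)"
      by (rule R_chain[OF Hs Ha]) (use aT0 aT_def in simp)
    have eqR: "Rs (s t) (a t) * (thd + (ad * t + 1 * aT)) + Ra (s t) (a t) * ad = aT * Rv"
      unfolding Rv_def Av_def St_def aT_def[symmetric] thd_def ad_def by (simp add: algebra_simps)
    have HR: "((\<lambda>y. Rf m l (s y) (a y)) has_real_derivative aT * Rv) (at t within S)"
      using HR0 eqR by simp
    have HRm: "((\<lambda>y. Rm m l (a y)) has_real_derivative Rmd m l aT * ad) (at t within S)"
      using DERIV_chain2[OF Rm_deriv Ha] aT0 aT_def by simp
    define core where "core = aT * Rv / (1 + Rt\<^sup>2) - Rmd m l aT * ad / (1 + (Rm m l aT)\<^sup>2)"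
    define psi where "psi y = arctan (Rf m l (s y) (a y)) - arctan (Rm m l (a y))" for y
    have Hpsi: "(psi has_real_derivative core) (at t within S)"
    proof -
      have "(psi has_real_derivative inverse (1 + (Rf m l (s t) (a t))\<^sup>2) * (aT * Rv) - inverse (1 + (Rm m l (a t))\<^sup>2) * (Rmd m l aT * ad)) (at t within S)"
        unfolding psi_def
        by (rule DERIV_diff[OF DERIV_chain2[OF DERIV_arctan HR] DERIV_chain2[OF DERIV_arctan HRm]])
      then show ?thesis unfolding core_def Rt_def St_def aT_def by (simp add: divide_inverse mult.commute)
    qed
    have Hphi: "(phi m l \<theta> a has_real_derivative sgn St * core) (at t within S)"
    proof (cases "St = 0")
      case True
      then have Rv0: "Rv = 0" unfolding Rv_def using Rs_sign(2)[OF aT0] by simp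
      then have ad0: "ad = 0" unfolding ad_def by simp
      define g where "g y = Rf m l (s y) (a y) - Rm m l (a y)" for y
      have gd: "(g has_real_derivative 0) (at t within S)"
        using DERIV_diff[OF HR HRm] Rv0 ad0 unfolding g_def by simp
      have g0: "g t = 0" unfolding g_def using True Rf_0[OF aT0] St_def aT_def by simp
      have p0: "phi m l \<theta> a t = 0" unfolding phi_def using True St_def s_def by simp
      have le: "\<bar>phi m l \<theta> a y\<bar> \<le> g y" if y: "y \<in> S" for y
      proof -
        have ay: "a y > 0" using ha y S_def by simp
        have ge: "Rf m l (s y) (a y) \<ge> Rm m l (a y)" using Rf_ge[OF ay] by simp
        have "\<bar>phi m l \<theta> a y\<bar> = \<bar>sgn (s y)\<bar> * \<bar>arctan (Rf m l (s y) (a y)) - arctan (Rm m l (a y))\<bar>"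
          unfolding phi_def s_def by (simp add: abs_mult)
        also have "\<dots> \<le> 1 * \<bar>Rf m l (s y) (a y) - Rm m l (a y)\<bar>"
          by (intro mult_mono arctan_abs_diff_le) (auto simp: abs_sgn_eq)
        also have "\<dots> = g y" using ge unfolding g_def by simp
        finally show ?thesis .
      qed
      have "(phi m l \<theta> a has_real_derivative 0) (at t within S)"
        by (rule deriv_squeeze[OF p0 g0 le gd])
      then show ?thesis using True by simp
    next
      case False
      have cs: "continuous (at t within S) s" using Hs by (rule DERIV_continuous)
      then have ts: "(s \<longlongrightarrow> St) (at t within S)" unfolding St_def continuous_within .
      have ev: "eventually (\<lambda>y. sgn (s y) = sgn St) (at t within S)"
      proof (cases "St > 0")
        case True
        have "eventually (\<lambda>y. s y > 0) (at t within S)" using order_tendstoD(1)[OF ts True] .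
        then show ?thesis by eventually_elim (use True in simp)
      next
        case False
        then have St0: "St < 0" using \<open>St \<noteq> 0\<close> by simp
        have "eventually (\<lambda>y. s y < 0) (at t within S)" using order_tendstoD(2)[OF ts St0] .
        then show ?thesis by eventually_elim (use St0 in simp)
      qed
      have ev2: "eventually (\<lambda>y. (\<lambda>y. sgn St * psi y) y = phi m l \<theta> a y) (at t within S)"
        using ev by eventually_elim (simp add: phi_def psi_def s_def)
      have eqt: "(\<lambda>y. sgn St * psi y) t = phi m l \<theta> a t" unfolding phi_def psi_def s_def St_def by simp
      have "((\<lambda>y. sgn St * psi y) has_real_derivative sgn St * core) (at t within S)"
        by (rule DERIV_cmult[OF Hpsi])
      then show ?thesis using has_field_derivative_cong_eventually[OF ev2 eqt] by simp
    qed
    have Ha2: "((\<lambda>y. (a y)\<^sup>2) has_real_derivative 2 * aT * ad) (at t within S)"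
      using DERIV_mult[OF Ha Ha] unfolding power2_eq_square aT_def by (simp add: algebra_simps)
    have HV: "(V has_real_derivative 2 * aT * ad + 4 * E * (sgn St * core)) (at t within S)"
      unfolding V_def by (rule DERIV_add[OF Ha2 DERIV_cmult[OF Hphi]])
    have VdE: "Vd t = 2 * aT * ad + 4 * E * (sgn St * core)"
      unfolding Vd_def core_def ad_def Fv_def Rt_def Rv_def St_def aT_def by simp
    have nn: "Vd t \<ge> 0"
    proof -
      have sX: "sgn St * Rv = \<bar>Rv\<bar>" unfolding Rv_def using Rs_sign(1)[OF aT0] by simp
      have s1: "\<bar>sgn St\<bar> \<le> 1" by (simp add: abs_sgn_eq)
      have Rt0: "Rt > 0" unfolding Rt_def using Rf_pos[OF aT0] by simp
      have u: "\<bar>lam * Fv\<bar> \<le> E / (1 + Rt\<^sup>2)"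
        using hF[of t Rt] t Rt0 lam unfolding S_def Fv_def by (simp add: abs_mult)
      have rb: "E * \<bar>Rmd m l aT\<bar> / (1 + (Rm m l aT)\<^sup>2) \<le> aT / 2" by (rule Rmd_bound[OF aT0 E])
      show ?thesis using Vd_nonneg[OF aT0 E(1) sX s1 u rb] unfolding VdE core_def ad_def
        by (simp add: algebra_simps)
    qed
    show ?thesis using HV VdE nn by simp
  qed
  have "V 0 \<le> V x"
    by (rule mono_within[of T V Vd x]) (use main x S_def in auto)
  then show ?thesis unfolding V_def .
qed

end



lemma final_arith:
  fixes a0 ax E \<delta> l m \<phi>0 \<phi>x B0 Bx :: real
  assumes a0: "a0 > 0" and ax: "ax > 0" and E: "E \<ge> 0" and d: "\<delta> > 0" "\<delta> < 1"
    and l: "l > 0" and m: "m > 0"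
    and Eb: "E \<le> \<delta>^4 / (64 * (1 + m))"
    and hD: "a0 * sqrt (jbr l) \<ge> \<delta>"
    and V: "a0\<^sup>2 + 4 * E * \<phi>0 \<le> ax\<^sup>2 + 4 * E * \<phi>x"
    and p0: "\<bar>\<phi>0\<bar> \<le> B0" and px: "\<bar>\<phi>x\<bar> \<le> Bx" and Bmono: "ax \<le> a0 \<Longrightarrow> Bx \<le> B0"
    and B2: "B0 \<le> 2" and Bl: "B0 \<le> m / l + a0 / sqrt l"
  shows "ax * sqrt (jbr l) \<ge> \<delta> / 2"
proof -
  have jb: "jbr l \<ge> 0" unfolding jbr_def by simp
  show ?thesis
proof (cases "ax \<ge> a0")
  case True
  have "a0 * sqrt (jbr l) \<le> ax * sqrt (jbr l)" using True by (intro mult_right_mono) (use jb in auto)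
  then show ?thesis using hD d by linarith
next
  case False
  then have Bx: "Bx \<le> B0" using Bmono by simp
  have J: "(sqrt (jbr l))\<^sup>2 = jbr l" unfolding jbr_def by simp
  have hD2: "a0\<^sup>2 * jbr l \<ge> \<delta>\<^sup>2"
  proof -
    have "\<delta>\<^sup>2 \<le> (a0 * sqrt (jbr l))\<^sup>2" using hD d by (intro power_mono) auto
    then show ?thesis using J by (simp add: power_mult_distrib)
  qed
  have d4: "\<delta>^4 \<le> \<delta>\<^sup>2" using d by (simp add: power_decreasing)
  have d2: "\<delta>\<^sup>2 \<le> \<delta>" using d by (simp add: power_decreasing power2_eq_square) 
  have E16: "16 * E \<le> \<delta>^4 / 4"
  proof -
    have "\<delta>^4 / (64 * (1 + m)) \<le> \<delta>^4 / 64" using m d by (intro divide_left_mono) auto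
    then have "E \<le> \<delta>^4 / 64" using Eb by linarith
    then show ?thesis by linarith
  qed
  have key: "8 * E * B0 \<le> 3 / 4 * a0\<^sup>2"
  proof (cases "l \<le> 1")
    case True
    have "l\<^sup>2 \<le> 1" using True l by (intro power_le_one) auto
    then have "2 + l\<^sup>2 \<le> 2\<^sup>2" by simp
    then have jb2: "jbr l \<le> 2" unfolding jbr_def by (intro real_le_lsqrt) auto
    have "a0\<^sup>2 * jbr l \<le> a0\<^sup>2 * 2" using jb2 by (rule mult_left_mono) simp
    then have "a0\<^sup>2 * 2 \<ge> \<delta>\<^sup>2" using hD2 by linarith
    moreover have "E * B0 \<le> E * 2" using B2 E by (rule mult_left_mono)
    then have "8 * E * B0 \<le> 16 * E" by linarith
    ultimately show ?thesis using E16 d4 zero_le_power2[of a0] by linarith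
  next
    case False
    then have l1: "l > 1" by simp
    have "jbr l \<le> 2 * l" unfolding jbr_def
    proof (rule real_le_lsqrt)
      have "1 * 1 < l * l" using l1 by (intro mult_strict_mono) auto
      then show "2 + l\<^sup>2 \<le> (2 * l)\<^sup>2" by (simp add: power2_eq_square)
    qed (use l in auto)
    then have "a0\<^sup>2 * jbr l \<le> a0\<^sup>2 * (2 * l)" by (rule mult_left_mono) simp
    then have A: "a0\<^sup>2 * (2 * l) \<ge> \<delta>\<^sup>2" using hD2 by linarith
    have q: "sqrt l > 0" "(sqrt l)\<^sup>2 = l" using l by auto
    have "8 * E * B0 \<le> 8 * E * (m / l) + 8 * E * (a0 / sqrt l)"
    proof -
      have "8 * E * B0 \<le> 8 * E * (m / l + a0 / sqrt l)" using Bl E by (intro mult_left_mono) auto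
      then show ?thesis by (simp add: distrib_left)
    qed
    moreover have "8 * E * (m / l) \<le> 3 / 8 * a0\<^sup>2"
    proof -
      have "8 * E * m \<le> \<delta>^4 / 8"
      proof -
        have "E * (8 * m) \<le> (\<delta>^4 / (64 * (1 + m))) * (8 * m)" using Eb m by (intro mult_right_mono) auto
        then have "8 * E * m \<le> 8 * (\<delta>^4 / (64 * (1 + m))) * m" by (simp add: algebra_simps)
        also have "\<dots> = \<delta>^4 / 8 * (m / (1 + m))" using m by (simp add: field_simps)
        also have "\<dots> \<le> \<delta>^4 / 8 * 1" using m by (intro mult_left_mono) auto
        finally show ?thesis by simp
      qed
      then have "8 * E * m \<le> \<delta>\<^sup>2 / 8" using d4 by linarith
      also have "\<dots> \<le> 3 / 8 * a0\<^sup>2 * l"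
      proof -
        have "a0\<^sup>2 * l \<ge> 0" using l by simp
        moreover have "a0\<^sup>2 * (2 * l) = 2 * (a0\<^sup>2 * l)" "3 / 8 * a0\<^sup>2 * l = 3 / 8 * (a0\<^sup>2 * l)" by simp_all
        ultimately show ?thesis using A by linarith
      qed
      finally have "8 * E * m \<le> 3 / 8 * a0\<^sup>2 * l" .
      then show ?thesis using l by (simp add: field_simps)
    qed
    moreover have "8 * E * (a0 / sqrt l) \<le> 3 / 8 * a0\<^sup>2"
    proof -
      have "(a0 * sqrt l)\<^sup>2 = a0\<^sup>2 * l" using q by (simp add: power_mult_distrib)
      moreover have "(\<delta> / 2)\<^sup>2 = \<delta>\<^sup>2 / 4" by (simp add: power_divide)
      moreover have "a0\<^sup>2 * l \<ge> 0" using l by simp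
      moreover have "a0\<^sup>2 * (2 * l) = 2 * (a0\<^sup>2 * l)" by simp
      ultimately have "(\<delta> / 2)\<^sup>2 \<le> (a0 * sqrt l)\<^sup>2" using A by linarith
      moreover have "0 \<le> a0 * sqrt l" using a0 q by simp
      ultimately have as: "\<delta> / 2 \<le> a0 * sqrt l" by (rule power2_le_imp_le)
      have "8 * E \<le> \<delta> / 8" using E16 d4 d2 by linarith
      also have "\<dots> \<le> 3 / 8 * (a0 * sqrt l)" using as d by linarith
      finally have "8 * E \<le> 3 / 8 * (a0 * sqrt l)" .
      then have "8 * E * (a0 / sqrt l) \<le> 3 / 8 * (a0 * sqrt l) * (a0 / sqrt l)"
        using a0 q by (intro mult_right_mono) auto
      also have "\<dots> = 3 / 8 * a0\<^sup>2" using q by (simp add: power2_eq_square field_simps)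
      finally show ?thesis .
    qed
    ultimately show ?thesis by linarith
  qed
  have "ax\<^sup>2 \<ge> a0\<^sup>2 - 4 * E * (\<phi>x - \<phi>0)" using V by (simp add: algebra_simps)
  moreover have "4 * E * (\<phi>x - \<phi>0) \<le> 4 * E * (2 * B0)"
    using p0 px Bx E by (intro mult_left_mono) auto
  moreover have "(a0 / 2)\<^sup>2 = a0\<^sup>2 / 4" by (simp add: power_divide)
  ultimately have "ax\<^sup>2 \<ge> (a0 / 2)\<^sup>2" using key by linarith
  moreover have "0 \<le> ax" using ax by simp
  ultimately have "ax \<ge> a0 / 2" by (rule power2_le_imp_le)
  then have "ax * sqrt (jbr l) \<ge> a0 / 2 * sqrt (jbr l)" by (intro mult_right_mono) (use jb in auto)
  then show ?thesis using hD by linarith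
qed
qed




theorem corollary4p2:
  fixes m lam C :: real
  assumes "0 < m" and "0 < lam"
  shows "\<exists>c>0. \<forall>(T::real) (\<epsilon>::real) (\<delta>::real) (l::real)
            (F::real \<Rightarrow> real \<Rightarrow> real) (\<theta>::real \<Rightarrow> real) (a::real \<Rightarrow> real).
     0 < T \<and> 0 < \<epsilon> \<and> 0 < \<delta> \<and> \<delta> < 1 \<and> \<epsilon> \<le> c * \<delta>\<^sup>2 \<and> 0 < l
     \<and> continuous_on ({0..T} \<times> {0<..}) (\<lambda>(t, r). F t r)
     \<and> (\<forall>t\<in>{0..T}. \<forall>r>0. \<bar>F t r\<bar> \<le> C * \<epsilon>\<^sup>2 / (1 + r\<^sup>2 + t\<^sup>2))
     \<and> (\<forall>t\<in>{0..T}. 0 < a t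
          \<and> (\<theta> has_real_derivative
               (- lam * F t (Rtil m l t (\<theta> t) (a t)) * da_Rtil m l t (\<theta> t) (a t)))
               (at t within {0..T})
          \<and> (a has_real_derivative
               (lam * F t (Rtil m l t (\<theta> t) (a t)) * dth_Rtil m l t (\<theta> t) (a t)))
               (at t within {0..T}))
     \<and> (\<theta> 0, a 0, l) \<in> DD \<delta>
     \<longrightarrow> (\<forall>t\<in>{0..T}. (\<theta> t, a t, l) \<in> DD (\<delta> / 2))"
proof -
  define M where "M = 1 + 64 * lam * \<bar>C\<bar> * (1 + m) + 4 * lam * \<bar>C\<bar> / m"
  define c where "c = 1 / M"
  have LC: "lam * \<bar>C\<bar> \<ge> 0" using assms by simp
  have M1: "M \<ge> 1" unfolding M_def using assms LC by (simp add: add_nonneg_nonneg)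
  have c0: "c > 0" and c1: "c \<le> 1" unfolding c_def using M1 by auto
  have cA: "lam * \<bar>C\<bar> * c \<le> 1 / (64 * (1 + m))"
  proof -
    have "64 * lam * \<bar>C\<bar> * (1 + m) \<le> M" unfolding M_def using assms LC by simp
    then have "lam * \<bar>C\<bar> * (64 * (1 + m)) \<le> M" by (simp add: algebra_simps)
    then have "lam * \<bar>C\<bar> \<le> M / (64 * (1 + m))" using assms by (simp add: pos_le_divide_eq)
    then have "lam * \<bar>C\<bar> / M \<le> 1 / (64 * (1 + m))" using M1 by (simp add: divide_le_eq field_simps)
    then show ?thesis unfolding c_def by simp
  qed
  have cB: "lam * \<bar>C\<bar> * c \<le> m / 4"
  proof -
    have "4 * lam * \<bar>C\<bar> / m \<le> M" unfolding M_def using assms LC by simp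
    then have "lam * \<bar>C\<bar> \<le> M * (m / 4)" using assms by (simp add: field_simps)
    then have "lam * \<bar>C\<bar> / M \<le> m / 4" using M1 by (simp add: divide_le_eq mult.commute)
    then show ?thesis unfolding c_def by simp
  qed
  show ?thesis
  proof (intro exI[of _ c] conjI c0 allI impI)
    fix T \<epsilon> \<delta> l :: real and F :: "real \<Rightarrow> real \<Rightarrow> real" and \<theta> a :: "real \<Rightarrow> real"
    assume H: "0 < T \<and> 0 < \<epsilon> \<and> 0 < \<delta> \<and> \<delta> < 1 \<and> \<epsilon> \<le> c * \<delta>\<^sup>2 \<and> 0 < l
     \<and> continuous_on ({0..T} \<times> {0<..}) (\<lambda>(t, r). F t r)
     \<and> (\<forall>t\<in>{0..T}. \<forall>r>0. \<bar>F t r\<bar> \<le> C * \<epsilon>\<^sup>2 / (1 + r\<^sup>2 + t\<^sup>2))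
     \<and> (\<forall>t\<in>{0..T}. 0 < a t
          \<and> (\<theta> has_real_derivative
               (- lam * F t (Rtil m l t (\<theta> t) (a t)) * da_Rtil m l t (\<theta> t) (a t)))
               (at t within {0..T})
          \<and> (a has_real_derivative
               (lam * F t (Rtil m l t (\<theta> t) (a t)) * dth_Rtil m l t (\<theta> t) (a t)))
               (at t within {0..T}))
     \<and> (\<theta> 0, a 0, l) \<in> DD \<delta>"
    then have T: "0 < T" and ep: "0 < \<epsilon>" and d: "0 < \<delta>" "\<delta> < 1" and epc: "\<epsilon> \<le> c * \<delta>\<^sup>2"
      and l: "0 < l"
      and Fb: "\<And>t r. t \<in> {0..T} \<Longrightarrow> r > 0 \<Longrightarrow> \<bar>F t r\<bar> \<le> C * \<epsilon>\<^sup>2 / (1 + r\<^sup>2 + t\<^sup>2)"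
      and ha: "\<And>t. t \<in> {0..T} \<Longrightarrow> 0 < a t"
      and dth: "\<And>t. t \<in> {0..T} \<Longrightarrow> (\<theta> has_real_derivative
               (- lam * F t (Rtil m l t (\<theta> t) (a t)) * da_Rtil m l t (\<theta> t) (a t))) (at t within {0..T})"
      and dA: "\<And>t. t \<in> {0..T} \<Longrightarrow> (a has_real_derivative
               (lam * F t (Rtil m l t (\<theta> t) (a t)) * dth_Rtil m l t (\<theta> t) (a t))) (at t within {0..T})"
      and D0: "(\<theta> 0, a 0, l) \<in> DD \<delta>"
      by auto
    interpret kep m l using assms(1) l by unfold_locales
    have e2: "\<epsilon>\<^sup>2 > 0" using ep by simp
    have C0: "C \<ge> 0"
    proof -
      have "0 \<le> \<bar>F 0 1\<bar>" by simp
      also have "\<dots> \<le> C * \<epsilon>\<^sup>2 / (1 + 1\<^sup>2 + 0\<^sup>2)" using Fb[of 0 1] T by simp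
      finally have "0 \<le> C * \<epsilon>\<^sup>2" by simp
      then show ?thesis using e2 by (simp add: zero_le_mult_iff)
    qed
    define E where "E = lam * C * \<epsilon>\<^sup>2"
    have E0: "E \<ge> 0" unfolding E_def using C0 assms by simp
    have ee: "\<epsilon>\<^sup>2 \<le> (c * \<delta>\<^sup>2)\<^sup>2" using ep epc by (intro power_mono) auto
    have d4: "\<delta>^4 \<le> 1" using d by (simp add: power_le_one)
    have Ec: "E \<le> (lam * \<bar>C\<bar> * c) * \<delta>^4"
    proof -
      have "E \<le> lam * C * (c * \<delta>\<^sup>2)\<^sup>2" unfolding E_def using ee C0 assms by (intro mult_left_mono) auto
      also have "\<dots> = (lam * \<bar>C\<bar> * c) * (c * \<delta>^4)"
      proof -
        have "(c * \<delta>\<^sup>2)\<^sup>2 = c * (c * \<delta>^4)" by (simp add: power_mult_distrib power2_eq_square eval_nat_numeral)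
        then show ?thesis using C0 by simp
      qed
      also have "\<dots> \<le> (lam * \<bar>C\<bar> * c) * (1 * \<delta>^4)"
        using c0 c1 LC by (intro mult_left_mono mult_right_mono) auto
      finally show ?thesis by simp
    qed
    have Eb: "E \<le> \<delta>^4 / (64 * (1 + m))"
    proof -
      have "(lam * \<bar>C\<bar> * c) * \<delta>^4 \<le> 1 / (64 * (1 + m)) * \<delta>^4" using cA by (intro mult_right_mono) auto
      then show ?thesis using Ec by simp
    qed
    have Em: "E \<le> m / 4"
    proof -
      have "(lam * \<bar>C\<bar> * c) * \<delta>^4 \<le> (m / 4) * 1" using cB d4 c0 LC assms(1) by (intro mult_mono) auto
      then show ?thesis using Ec by simp
    qed
    have hF: "lam * \<bar>F t r\<bar> \<le> E / (1 + r\<^sup>2)" if t: "t \<in> {0..T}" and r: "r > 0" for t r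
    proof -
      have "C * \<epsilon>\<^sup>2 / (1 + r\<^sup>2 + t\<^sup>2) \<le> C * \<epsilon>\<^sup>2 / (1 + r\<^sup>2)"
        using C0 by (intro divide_left_mono) (auto simp: add_pos_nonneg)
      then have "\<bar>F t r\<bar> \<le> C * \<epsilon>\<^sup>2 / (1 + r\<^sup>2)" using Fb[OF t r] by linarith
      then have "lam * \<bar>F t r\<bar> \<le> lam * (C * \<epsilon>\<^sup>2 / (1 + r\<^sup>2))" using assms by (intro mult_left_mono) auto
      then show ?thesis unfolding E_def by simp
    qed
    have a0: "a 0 > 0" using ha T by simp
    have hD: "a 0 * sqrt (jbr l) \<ge> \<delta>" using D0 unfolding DD_def by simp
    show "\<forall>t\<in>{0..T}. (\<theta> t, a t, l) \<in> DD (\<delta> / 2)"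
    proof
      fix x assume x: "x \<in> {0..T}"
      have ax: "a x > 0" using ha x by simp
      have V: "(a 0)\<^sup>2 + 4 * E * phi m l \<theta> a 0 \<le> (a x)\<^sup>2 + 4 * E * phi m l \<theta> a x"
        by (rule dyn[OF assms(2) E0 Em hF ha dth dA x])
      have p0: "\<bar>phi m l \<theta> a 0\<bar> \<le> pi/2 - arctan (Rm m l (a 0))" by (rule phi_bound[of a 0, OF a0])
      have px: "\<bar>phi m l \<theta> a x\<bar> \<le> pi/2 - arctan (Rm m l (a x))" by (rule phi_bound[of a x, OF ax])
      have Bm: "pi/2 - arctan (Rm m l (a x)) \<le> pi/2 - arctan (Rm m l (a 0))" if "a x \<le> a 0"
        using Rm_mono[OF ax that] by (simp add: arctan_le_iff)
      have B2: "pi/2 - arctan (Rm m l (a 0)) \<le> 2"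
      proof -
        have "arctan (Rm m l (a 0)) > 0" using Rm_pos by simp
        then show ?thesis using pi_less_4 by linarith
      qed
      have Bl: "pi/2 - arctan (Rm m l (a 0)) \<le> m / l + a 0 / sqrt l"
        using pi2_minus_arctan_le[OF Rm_pos[of "a 0"]] Rm_inv_bound[OF a0] by linarith
      have "a x * sqrt (jbr l) \<ge> \<delta> / 2"
        by (rule final_arith[OF a0 ax E0 d l assms(1) Eb hD V p0 px Bm B2 Bl])
      then show "(\<theta> x, a x, l) \<in> DD (\<delta> / 2)" unfolding DD_def using ax l by simp
    qed
  qed
qed


end
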